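(* Let $\mathcal{C}$ be a finite set of size $k\geq1$ and let $(\omega_n)_{n=0}^\infty$ be a sequence of distributions on $\mathcal{C}$ such that $\omega_n\trianglelefteq\omega_{n+1}$ for all $n$. Suppose there is a real $A\geq 1$ such that for all $n\in\mathbb{N}$ and all $\alpha\in\mathcal{D}^+(\omega_n,\omega_{n+1})$, \[\|\omega_{n+1}-\omega_n\|_1\leq A\cdot(\omega_{n+1}(\alpha)-\omega_n(\alpha)).\] Then \[\sum_{n=0}^\infty\|\omega_{n+1}-\omega_n\|_1\leq\frac{(1+A)^{k+1}}{A}\cdot\mathrm{disc}(\omega_0)<\infty.\]
   Context: A distribution on $\mathcal{C}$ is a function $\omega\colon\mathcal{C}\to[0,1]$ with $\sum_\alpha\omega(\alpha)=1$; $\|\omega\|_1=\sum_\alpha|\omega(\alpha)|$; $\mathrm{disc}(\omega)=\max_{\alpha}|\omega(\alpha)-1/k|$. For distributions $\omega,\eta$: $\mathcal{D}^+(\omega,\eta)=\{\alpha:\eta(\alpha)>\omega(\alpha)\}$, $\mathcal{D}^-(\omega,\eta)=\{\alpha:\eta(\alpha)<\omega(\alpha)\}$. We write $\omega\vartriangleleft\eta$ if there is $\alpha\in\mathcal{D}^+(\omega,\eta)$ such that $\eta(\alpha)\leq\eta(\beta)$ for all $\beta\in\mathcal{D}^-(\omega,\eta)$, and $\omega\trianglelefteq\eta$ if $\omega\vartriangleleft\eta$ or $\omega=\eta$. *)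

theory Defs
  imports "HOL-Analysis.Analysis"
begin

(* A distribution on a finite set C: a function C -> [0,1] summing to 1.
   Functions are of type 'a => real; values outside C are irrelevant. *)
definition is_distribution :: "'a set \<Rightarrow> ('a \<Rightarrow> real) \<Rightarrow> bool" where
  "is_distribution C \<omega> \<longleftrightarrow> (\<forall>\<alpha>\<in>C. 0 \<le> \<omega> \<alpha> \<and> \<omega> \<alpha> \<le> 1) \<and> (\<Sum>\<alpha>\<in>C. \<omega> \<alpha>) = 1"

definition l1norm :: "'a set \<Rightarrow> ('a \<Rightarrow> real) \<Rightarrow> real" where
  "l1norm C \<omega> = (\<Sum>\<alpha>\<in>C. \<bar>\<omega> \<alpha>\<bar>)"

definition disc :: "'a set \<Rightarrow> ('a \<Rightarrow> real) \<Rightarrow> real" where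
  "disc C \<omega> = (MAX \<alpha>\<in>C. \<bar>\<omega> \<alpha> - 1 / real (card C)\<bar>)"

definition Dplus :: "'a set \<Rightarrow> ('a \<Rightarrow> real) \<Rightarrow> ('a \<Rightarrow> real) \<Rightarrow> 'a set" where
  "Dplus C \<omega> \<eta> = {\<alpha>\<in>C. \<eta> \<alpha> > \<omega> \<alpha>}"

definition Dminus :: "'a set \<Rightarrow> ('a \<Rightarrow> real) \<Rightarrow> ('a \<Rightarrow> real) \<Rightarrow> 'a set" where
  "Dminus C \<omega> \<eta> = {\<alpha>\<in>C. \<eta> \<alpha> < \<omega> \<alpha>}"

definition tri_less :: "'a set \<Rightarrow> ('a \<Rightarrow> real) \<Rightarrow> ('a \<Rightarrow> real) \<Rightarrow> bool" where
  "tri_less C \<omega> \<eta> \<longleftrightarrow> (\<exists>\<alpha>\<in>Dplus C \<omega> \<eta>. \<forall>\<beta>\<in>Dminus C \<omega> \<eta>. \<eta> \<alpha> \<le> \<eta> \<beta>)"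

definition tri_le :: "'a set \<Rightarrow> ('a \<Rightarrow> real) \<Rightarrow> ('a \<Rightarrow> real) \<Rightarrow> bool" where
  "tri_le C \<omega> \<eta> \<longleftrightarrow> tri_less C \<omega> \<eta> \<or> (\<forall>\<alpha>\<in>C. \<omega> \<alpha> = \<eta> \<alpha>)"

end

theory Submission
  imports Defs
begin

definition Bmin :: "'a set \<Rightarrow> nat \<Rightarrow> ('a \<Rightarrow> real) \<Rightarrow> real" where
  "Bmin C j w = Min ((\<lambda>S. sum w S) ` {S. S \<subseteq> C \<and> card S = j})"

lemma fin_subsets: "finite C \<Longrightarrow> finite {S. S \<subseteq> C \<and> card S = j}"
  by (rule finite_subset[of _ "Pow C"]) auto

lemma Bmin_le:
  assumes "finite C" "S \<subseteq> C" "card S = j"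
  shows "Bmin C j w \<le> sum w S"
  unfolding Bmin_def
  by (rule Min_le) (use assms fin_subsets in auto)

lemma Bmin_obtain:
  assumes "finite C" "j \<le> card C"
  shows "\<exists>S. S \<subseteq> C \<and> card S = j \<and> Bmin C j w = sum w S"
proof -
  have fin: "finite {S. S \<subseteq> C \<and> card S = j}" using assms(1) by (rule fin_subsets)
  obtain S0 where "S0 \<subseteq> C" "card S0 = j" using obtain_subset_with_card_n[OF assms(2)] by auto
  hence ne: "{S. S \<subseteq> C \<and> card S = j} \<noteq> {}" by auto
  have "Bmin C j w \<in> (\<lambda>S. sum w S) ` {S. S \<subseteq> C \<and> card S = j}"
    unfolding Bmin_def using fin ne by (intro Min_in) auto
  thus ?thesis by auto
qed

lemma Bmin_ge:
  assumes "finite C" "j \<le> card C" "\<And>S. S \<subseteq> C \<Longrightarrow> card S = j \<Longrightarrow> b \<le> sum w S"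
  shows "b \<le> Bmin C j w"
  using Bmin_obtain[OF assms(1,2), of w] assms(3) by auto

lemma Bmin_cong:
  assumes "\<forall>x\<in>C. w x = v x"
  shows "Bmin C j w = Bmin C j v"
proof -
  have "(\<lambda>S. sum w S) ` {S. S \<subseteq> C \<and> card S = j} = (\<lambda>S. sum v S) ` {S. S \<subseteq> C \<and> card S = j}"
    using assms by (intro image_cong refl sum.cong) auto
  thus ?thesis unfolding Bmin_def by simp
qed

lemma avg_subset:
  fixes w :: "'a \<Rightarrow> real"
  assumes "finite C" "j \<le> card C"
  shows "\<exists>S. S \<subseteq> C \<and> card S = j \<and> real (card C) * sum w S \<le> real j * sum w C"
  using assms
proof (induction "card C" arbitrary: C)
  case 0
  then show ?case by (intro exI[of _ "{}"]) auto
next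
  case (Suc n)
  show ?case
  proof (cases "j = card C")
    case True
    then show ?thesis by (intro exI[of _ C]) auto
  next
    case False
    hence jn: "j \<le> n" using Suc by simp
    have ne: "C \<noteq> {}" using Suc.hyps(2) by auto
    have "Max (w ` C) \<in> w ` C" using Suc.prems ne by (intro Max_in) auto
    then obtain m where mC: "m \<in> C" and mdef: "w m = Max (w ` C)" by auto
    have mmax: "\<And>x. x \<in> C \<Longrightarrow> w x \<le> w m"
      unfolding mdef using Suc.prems by (intro Max_ge) auto
    define C' where "C' = C - {m}"
    have cC': "n = card C'" unfolding C'_def using Suc.hyps(2) mC Suc.prems by simp
    have finC': "finite C'" unfolding C'_def using Suc.prems by simp
    obtain S where S: "S \<subseteq> C'" "card S = j" "real (card C') * sum w S \<le> real j * sum w C'"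
      using Suc.hyps(1)[OF cC' finC'] jn cC' by auto
    have "sum w S \<le> real j * w m"
      using sum_bounded_above[of S w "w m"] S mmax unfolding C'_def by auto
    moreover have "sum w C = sum w C' + w m"
      unfolding C'_def using Suc.prems mC by (simp add: sum.remove)
    moreover have "real (card C) = real (card C') + 1" using Suc.hyps(2) cC' by simp
    ultimately have "real (card C) * sum w S \<le> real j * sum w C"
      using S(3) by (simp add: algebra_simps)
    moreover have "S \<subseteq> C" using S unfolding C'_def by auto
    ultimately show ?thesis using S by auto
  qed
qed

definition Phi :: "'a set \<Rightarrow> nat \<Rightarrow> real \<Rightarrow> ('a \<Rightarrow> real) \<Rightarrow> real" where
  "Phi C k y w = (\<Sum>j\<in>{1..<k}. y^(k-j) * (real j / real k - Bmin C j w))"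

lemma Phi_nonneg:
  assumes "finite C" "card C = k" "sum w C = 1" "y \<ge> 0"
  shows "0 \<le> Phi C k y w"
  unfolding Phi_def
proof (intro sum_nonneg mult_nonneg_nonneg)
  fix j assume j: "j \<in> {1..<k}"
  show "0 \<le> y^(k-j)" using assms by simp
  obtain S where S: "S \<subseteq> C" "card S = j" "real k * sum w S \<le> real j"
    using avg_subset[OF assms(1), of j w] j assms by auto
  have "Bmin C j w \<le> sum w S" using Bmin_le[OF assms(1) S(1,2)] .
  also have "sum w S \<le> real j / real k" using S(3) j by (simp add: field_simps)
  finally show "0 \<le> real j / real k - Bmin C j w" by simp
qed

lemma Phi_upper:
  assumes "finite C" "card C = k" "\<And>b. b \<in> C \<Longrightarrow> \<bar>w b - 1 / real k\<bar> \<le> D" "y \<ge> 0"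
  shows "Phi C k y w \<le> D * (\<Sum>j\<in>{1..<k}. real j * y^(k-j))"
  unfolding Phi_def sum_distrib_left
proof (intro sum_mono)
  fix j assume j: "j \<in> {1..<k}"
  have "real j * (1 / real k - D) \<le> Bmin C j w"
  proof (rule Bmin_ge[OF assms(1)])
    show "j \<le> card C" using j assms by simp
    fix S assume S: "S \<subseteq> C" "card S = j"
    have "\<And>b. b \<in> S \<Longrightarrow> 1 / real k - D \<le> w b"
    proof -
      fix b assume "b \<in> S"
      hence "\<bar>w b - 1 / real k\<bar> \<le> D" using assms(3) S(1) by auto
      thus "1 / real k - D \<le> w b" by (simp add: abs_le_iff)
    qed
    from sum_bounded_below[of S "1 / real k - D" w, OF this] S(2)
    show "real j * (1 / real k - D) \<le> sum w S" by simp
  qed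
  hence "real j / real k - Bmin C j w \<le> D * real j" by (simp add: algebra_simps)
  hence "y^(k-j) * (real j / real k - Bmin C j w) \<le> y^(k-j) * (D * real j)"
    using assms(4) by (intro mult_left_mono) auto
  thus "y^(k-j) * (real j / real k - Bmin C j w) \<le> D * (real j * y^(k-j))" by (simp add: algebra_simps)
qed

lemma geom_id:
  fixes A :: real
  assumes "m < k"
  shows "A * (\<Sum>j\<in>{Suc m..<k}. (1+A)^(k-j)) = (1+A)^(k-m) - (1+A)"
  using assms
proof (induction k)
  case 0 then show ?case by simp
next
  case (Suc k)
  show ?case
  proof (cases "m = k")
    case True then show ?thesis by simp
  next
    case False
    hence mk: "m < k" using Suc by simp
    have "(\<Sum>j\<in>{Suc m..<Suc k}. (1+A)^(Suc k-j)) = (\<Sum>j\<in>{Suc m..<k}. (1+A)^(Suc k-j)) + (1+A)"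
      using mk by (simp add: sum.atLeastLessThan_Suc)
    also have "(\<Sum>j\<in>{Suc m..<k}. (1+A)^(Suc k-j)) = (1+A) * (\<Sum>j\<in>{Suc m..<k}. (1+A)^(k-j))"
      unfolding sum_distrib_left by (intro sum.cong refl) (auto simp: Suc_diff_le)
    finally have e: "(\<Sum>j\<in>{Suc m..<Suc k}. (1+A)^(Suc k-j)) = (1+A) * (\<Sum>j\<in>{Suc m..<k}. (1+A)^(k-j)) + (1+A)" .
    have e2: "(1+A)^(Suc k - m) = (1+A) * (1+A)^(k-m)" using mk by (simp add: Suc_diff_le)
    have "A * ((1+A) * (\<Sum>j\<in>{Suc m..<k}. (1+A)^(k-j)) + (1+A)) = (1+A) * (A * (\<Sum>j\<in>{Suc m..<k}. (1+A)^(k-j))) + A*(1+A)"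
      by (simp add: algebra_simps)
    also have "\<dots> = (1+A) * ((1+A)^(k-m) - (1+A)) + A*(1+A)" using Suc.IH[OF mk] by simp
    also have "\<dots> = (1+A) * (1+A)^(k-m) - (1+A)" by (simp add: algebra_simps)
    finally show ?thesis unfolding e e2 .
  qed
qed

lemma wsum_id:
  fixes A :: real
  assumes "1 \<le> k"
  shows "A * A * (\<Sum>j\<in>{1..<k}. real j * (1+A)^(k-j)) + real k * A * (1+A) + (1+A) = (1+A)^(k+1)"
  using assms
proof (induction k)
  case 0 then show ?case by simp
next
  case (Suc k)
  show ?case
  proof (cases "k = 0")
    case True then show ?thesis by (simp add: algebra_simps power2_eq_square)
  next
    case False
    hence k1: "1 \<le> k" by simp
    have "(\<Sum>j\<in>{1..<Suc k}. real j * (1+A)^(Suc k-j)) = (\<Sum>j\<in>{1..<k}. real j * (1+A)^(Suc k-j)) + real k * (1+A)"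
      using k1 by (simp add: sum.atLeastLessThan_Suc)
    also have "(\<Sum>j\<in>{1..<k}. real j * (1+A)^(Suc k-j)) = (1+A) * (\<Sum>j\<in>{1..<k}. real j * (1+A)^(k-j))"
      unfolding sum_distrib_left by (intro sum.cong refl) (auto simp: Suc_diff_le)
    finally have e: "(\<Sum>j\<in>{1..<Suc k}. real j * (1+A)^(Suc k-j)) = (1+A) * (\<Sum>j\<in>{1..<k}. real j * (1+A)^(k-j)) + real k * (1+A)" .
    have e2: "(1+A)^(Suc k + 1) = (1+A) * (1+A)^(k+1)" by simp
    define G where "G = (\<Sum>j\<in>{1..<k}. real j * (1+A)^(k-j))"
    have IH: "A * A * G + real k * A * (1+A) + (1+A) = (1+A)^(k+1)" using Suc.IH[OF k1] unfolding G_def .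
    have "A * A * ((1+A) * G + real k * (1+A)) + real (Suc k) * A * (1+A) + (1+A)
       = (1+A) * (A * A * G + real k * A * (1+A) + (1+A))"
      by (simp add: algebra_simps)
    also have "\<dots> = (1+A) * (1+A)^(k+1)" using IH by simp
    finally show ?thesis unfolding e e2 G_def .
  qed
qed

lemma step:
  fixes w v :: "'a \<Rightarrow> real" and A :: real
  assumes fin: "finite C" and k: "card C = k"
    and sw: "sum w C = 1" and sv: "sum v C = 1"
    and tl: "tri_less C w v" and A: "A \<ge> 1"
    and cond: "\<And>\<alpha>. \<alpha> \<in> Dplus C w v \<Longrightarrow> l1norm C (\<lambda>\<beta>. v \<beta> - w \<beta>) \<le> A * (v \<alpha> - w \<alpha>)"
  shows "l1norm C (\<lambda>\<beta>. v \<beta> - w \<beta>) * (1+A) \<le> 2 * A * (Phi C k (1+A) w - Phi C k (1+A) v)"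
proof -
  define y where "y = 1 + A"
  define d where "d = l1norm C (\<lambda>\<beta>. v \<beta> - w \<beta>)"
  define P where "P = (\<Sum>\<beta>\<in>C. max 0 (w \<beta> - v \<beta>))"
  obtain a where aC: "a \<in> C" and aup: "v a > w a" and amin: "\<And>b. b \<in> Dminus C w v \<Longrightarrow> v a \<le> v b"
    using tl unfolding tri_less_def Dplus_def by auto
  have hd: "d \<le> A * (v a - w a)" unfolding d_def using cond aC aup unfolding Dplus_def by auto
  have dP: "d = 2 * P"
  proof -
    have "d = (\<Sum>b\<in>C. (v b - w b) + 2 * max 0 (w b - v b))"
      unfolding d_def l1norm_def by (intro sum.cong) (auto simp: abs_if max_def)
    also have "\<dots> = (\<Sum>b\<in>C. (v b - w b)) + 2 * P"
      unfolding P_def by (simp add: sum.distrib sum_distrib_left)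
    also have "(\<Sum>b\<in>C. (v b - w b)) = 0" using sw sv by (simp add: sum_subtractf)
    finally show ?thesis by simp
  qed
  have P0: "P \<ge> 0" unfolding P_def by (intro sum_nonneg) auto
  define U where "U = {b\<in>C. v b < v a} \<union> {a}"
  have UC: "U \<subseteq> C" unfolding U_def using aC by auto
  have finU: "finite U" using finite_subset[OF UC fin] .
  have aU: "a \<in> U" unfolding U_def by auto
  have Ule: "\<And>b. b \<in> U \<Longrightarrow> v b \<le> v a" unfolding U_def by auto
  have Uge: "\<And>b. b \<in> C \<Longrightarrow> b \<notin> U \<Longrightarrow> v a \<le> v b" unfolding U_def by auto
  have Umono: "w b \<le> v b" if bU: "b \<in> U" for b
  proof (rule ccontr)
    assume nb: "\<not> w b \<le> v b"
    hence "b \<in> Dminus C w v" using bU UC unfolding Dminus_def by auto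
    hence "v a \<le> v b" by (rule amin)
    moreover have "b \<noteq> a" using nb aup by auto
    ultimately show False using bU unfolding U_def by auto
  qed
  obtain g where gC: "g \<in> C" and gdown: "v g < w g"
  proof (rule ccontr)
    assume "\<not> thesis"
    hence "\<forall>b\<in>C. w b \<le> v b" using that by force
    hence "sum w C < sum v C" using aC aup fin by (intro sum_strict_mono_ex1) auto
    thus False using sw sv by simp
  qed
  have gU: "g \<notin> U" using Umono gdown by force
  define js where "js = card U"
  have js1: "1 \<le> js" unfolding js_def using finU aU card_gt_0_iff[of U] by auto
  have "U \<subset> C" using UC gC gU by auto
  hence jsk: "js < k" unfolding js_def k[symmetric] using psubset_card_mono[OF fin] by auto
  have hB1: "Bmin C j w - P \<le> Bmin C j v" if "j \<le> k" for j
  proof (rule Bmin_ge[OF fin])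
    show "j \<le> card C" using that k by simp
    fix S assume S: "S \<subseteq> C" "card S = j"
    have "sum w S - sum v S = (\<Sum>b\<in>S. w b - v b)" by (simp add: sum_subtractf)
    also have "\<dots> \<le> (\<Sum>b\<in>S. max 0 (w b - v b))" by (intro sum_mono) auto
    also have "\<dots> \<le> P" unfolding P_def by (intro sum_mono2 fin S) auto
    finally have "sum w S - P \<le> sum v S" by simp
    moreover have "Bmin C j w \<le> sum w S" by (rule Bmin_le[OF fin S])
    ultimately show "Bmin C j w - P \<le> sum v S" by simp
  qed
  have swap: "\<exists>S'. S' \<subseteq> U \<and> card S' = card S \<and> sum v S' \<le> sum v S"
    if S: "S \<subseteq> C" "card S \<le> js" for S
  proof -
    define I where "I = S \<inter> U"
    define Ou where "Ou = S - U"
    have finS: "finite S" using finite_subset[OF S(1) fin] .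
    have SIO: "S = I \<union> Ou" "I \<inter> Ou = {}" unfolding I_def Ou_def by auto
    have finI: "finite I" "finite Ou" using finS unfolding I_def Ou_def by auto
    have cS: "card S = card I + card Ou" using card_Un_disjoint[OF finI SIO(2)] SIO(1) by simp
    have cUS: "card (U - S) = card U - card I"
      using card_Diff_subset_Int[of U S] finU unfolding I_def by (simp add: Int_commute)
    have "card Ou \<le> card (U - S)" using cUS cS S(2) unfolding js_def by simp
    then obtain T where T: "T \<subseteq> U - S" "card T = card Ou" "finite T"
      using obtain_subset_with_card_n by metis
    have IT: "I \<inter> T = {}" using T(1) unfolding I_def by auto
    define S' where "S' = I \<union> T"
    have S'U: "S' \<subseteq> U" unfolding S'_def I_def using T(1) by auto
    have cS': "card S' = card S" unfolding S'_def using card_Un_disjoint[OF finI(1) T(3) IT] T(2) cS by simp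
    have "sum v S' = sum v I + sum v T" unfolding S'_def using sum.union_disjoint[OF finI(1) T(3) IT] .
    also have "sum v T \<le> real (card T) * v a"
      using sum_bounded_above[of T v "v a"] Ule T(1) by auto
    also have "real (card T) * v a \<le> sum v Ou"
      using sum_bounded_below[of Ou "v a" v] Uge S(1) T(2) unfolding Ou_def by auto
    also have "sum v I + sum v Ou = sum v S" using sum.union_disjoint[OF finI SIO(2), of v] SIO(1) by simp
    finally show ?thesis using S'U cS' by auto
  qed
  have hB2: "Bmin C j w \<le> Bmin C j v" if jjs: "j \<le> js" for j
  proof (rule Bmin_ge[OF fin])
    show "j \<le> card C" using that jsk k by simp
    fix S assume S: "S \<subseteq> C" "card S = j"
    obtain S' where S': "S' \<subseteq> U" "card S' = j" "sum v S' \<le> sum v S" using swap[of S] S jjs by auto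
    have "Bmin C j w \<le> sum w S'" using Bmin_le[OF fin _ S'(2)] S'(1) UC by auto
    also have "\<dots> \<le> sum v S'" using S'(1) Umono by (intro sum_mono) auto
    finally show "Bmin C j w \<le> sum v S" using S'(3) by simp
  qed
  have hB3: "Bmin C js w + (v a - w a) \<le> Bmin C js v"
  proof (rule Bmin_ge[OF fin])
    show "js \<le> card C" using jsk k by simp
    fix S assume S: "S \<subseteq> C" "card S = js"
    obtain S' where S': "S' \<subseteq> U" "card S' = js" "sum v S' \<le> sum v S" using swap[of S] S by auto
    have "S' = U" using card_subset_eq[OF finU S'(1)] S'(2) unfolding js_def by simp
    have "Bmin C js w \<le> sum w U" using Bmin_le[OF fin UC] unfolding js_def by simp
    moreover have "sum v U - sum w U = (v a - w a) + (\<Sum>b\<in>U-{a}. v b - w b)"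
      using sum.remove[OF finU aU, of "\<lambda>b. v b - w b"] by (simp add: sum_subtractf)
    moreover have "(\<Sum>b\<in>U-{a}. v b - w b) \<ge> 0" using Umono by (intro sum_nonneg) auto
    ultimately show "Bmin C js w + (v a - w a) \<le> sum v S" using S'(3) \<open>S' = U\<close> by simp
  qed
  define D where "D j = Bmin C j v - Bmin C j w" for j
  have "Phi C k y w - Phi C k y v = (\<Sum>j\<in>{1..<k}. y^(k-j) * D j)"
    unfolding Phi_def D_def sum_subtractf[symmetric] by (intro sum.cong) (auto simp: algebra_simps)
  also have "\<dots> = (\<Sum>j\<in>{1..<js}. y^(k-j) * D j) + (y^(k-js) * D js + (\<Sum>j\<in>{Suc js..<k}. y^(k-j) * D j))"
    using sum.atLeastLessThan_concat[of 1 js k "\<lambda>j. y^(k-j) * D j", symmetric] js1 jsk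
      sum.atLeast_Suc_lessThan[of js k "\<lambda>j. y^(k-j) * D j"] by simp
  finally have split: "Phi C k y w - Phi C k y v = (\<Sum>j\<in>{1..<js}. y^(k-j) * D j) + (y^(k-js) * D js + (\<Sum>j\<in>{Suc js..<k}. y^(k-j) * D j))" .
  have y0: "y > 0" unfolding y_def using A by simp
  have T1: "(\<Sum>j\<in>{1..<js}. y^(k-j) * D j) \<ge> 0"
    using hB2 y0 unfolding D_def by (intro sum_nonneg mult_nonneg_nonneg) auto
  define Y where "Y = y^(k-js)"
  have Y0: "Y \<ge> 0" unfolding Y_def using y0 by simp
  have T2: "A * (Y * D js) \<ge> Y * d"
  proof -
    have "Y * d \<le> Y * (A * (v a - w a))" using hd Y0 by (intro mult_left_mono) auto
    also have "\<dots> \<le> Y * (A * D js)" using hB3 Y0 A unfolding D_def by (intro mult_left_mono) auto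
    finally show ?thesis by (simp add: algebra_simps)
  qed
  define G where "G = (\<Sum>j\<in>{Suc js..<k}. y^(k-j))"
  have AG: "A * G = Y - y" unfolding G_def Y_def y_def using geom_id[OF jsk] by simp
  have T3: "(\<Sum>j\<in>{Suc js..<k}. y^(k-j) * D j) \<ge> - P * G"
  proof -
    have "(\<Sum>j\<in>{Suc js..<k}. y^(k-j) * D j) \<ge> (\<Sum>j\<in>{Suc js..<k}. y^(k-j) * (- P))"
    proof (intro sum_mono mult_left_mono)
      fix j assume "j \<in> {Suc js..<k}"
      hence "j \<le> k" by simp
      from hB1[OF this] show "- P \<le> D j" unfolding D_def by simp
      show "0 \<le> y^(k-j)" using y0 by simp
    qed
    thus ?thesis unfolding G_def sum_distrib_right[symmetric] by (simp add: mult.commute)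
  qed
  have T3': "A * (\<Sum>j\<in>{Suc js..<k}. y^(k-j) * D j) \<ge> - P * (Y - y)"
  proof -
    have "A * (\<Sum>j\<in>{Suc js..<k}. y^(k-j) * D j) \<ge> A * (- P * G)" using T3 A by (intro mult_left_mono) auto
    also have "A * (- P * G) = - P * (A * G)" by simp
    finally show ?thesis using AG by simp
  qed
  have dY: "d * Y \<ge> 0" using dP P0 Y0 by simp
  define T1v where "T1v = (\<Sum>j\<in>{1..<js}. y^(k-j) * D j)"
  define T3v where "T3v = (\<Sum>j\<in>{Suc js..<k}. y^(k-j) * D j)"
  have AT1: "A * T1v \<ge> 0" unfolding T1v_def using T1 A by simp
  have sp: "Phi C k y w - Phi C k y v = T1v + (Y * D js + T3v)"
    unfolding split T1v_def T3v_def Y_def ..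
  have e: "2 * A * (T1v + (Y * D js + T3v)) = 2 * (A * T1v) + 2 * (A * (Y * D js)) + 2 * (A * T3v)"
    by (simp add: algebra_simps)
  have "d * y \<le> 2 * A * (Phi C k y w - Phi C k y v)"
    unfolding sp e using AT1 T2 T3'[folded T3v_def] dP dY
    by (simp add: algebra_simps)
  thus ?thesis unfolding d_def y_def .
qed

theorem lemma3p2:
  fixes C :: "'a set" and k :: nat and \<omega> :: "nat \<Rightarrow> 'a \<Rightarrow> real" and A :: real
  assumes "finite C" and "card C = k" and "k \<ge> 1"
    and "\<And>n. is_distribution C (\<omega> n)"
    and "\<And>n. tri_le C (\<omega> n) (\<omega> (Suc n))"
    and "A \<ge> 1"
    and "\<And>n \<alpha>. \<alpha> \<in> Dplus C (\<omega> n) (\<omega> (Suc n)) \<Longrightarrow>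
           l1norm C (\<lambda>\<beta>. \<omega> (Suc n) \<beta> - \<omega> n \<beta>) \<le> A * (\<omega> (Suc n) \<alpha> - \<omega> n \<alpha>)"
  shows "summable (\<lambda>n. l1norm C (\<lambda>\<beta>. \<omega> (Suc n) \<beta> - \<omega> n \<beta>)) \<and>
         (\<Sum>n. l1norm C (\<lambda>\<beta>. \<omega> (Suc n) \<beta> - \<omega> n \<beta>)) \<le> (1 + A) ^ (k + 1) / A * disc C (\<omega> 0)"
proof -
  define y where "y = 1 + A"
  define d where "d n = l1norm C (\<lambda>\<beta>. \<omega> (Suc n) \<beta> - \<omega> n \<beta>)" for n
  define F where "F n = Phi C k y (\<omega> n)" for n
  have y2: "y \<ge> 2" using assms(6) unfolding y_def by simp
  have sums: "\<And>n. sum (\<omega> n) C = 1" using assms(4) unfolding is_distribution_def by auto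
  have hstep: "d n * y \<le> 2 * A * (F n - F (Suc n))" for n
  proof (cases "tri_less C (\<omega> n) (\<omega> (Suc n))")
    case True
    show ?thesis unfolding d_def F_def y_def
      by (rule step[OF assms(1,2) sums sums True assms(6) assms(7)])
  next
    case False
    hence eq: "\<forall>x\<in>C. \<omega> n x = \<omega> (Suc n) x" using assms(5)[of n] unfolding tri_le_def by auto
    have "d n = 0" unfolding d_def l1norm_def using eq by simp
    moreover have "F n = F (Suc n)" unfolding F_def Phi_def using Bmin_cong[OF eq] by simp
    ultimately show ?thesis by simp
  qed
  have F0: "F n \<ge> 0" for n unfolding F_def using Phi_nonneg[OF assms(1,2) sums] y2 by simp
  have d0: "d n \<ge> 0" for n unfolding d_def l1norm_def by (intro sum_nonneg) auto
  have tel: "(\<Sum>n<N. d n) * y \<le> 2 * A * (F 0 - F N)" for N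
  proof (induction N)
    case 0 then show ?case by simp
  next
    case (Suc N)
    have "(\<Sum>n<Suc N. d n) * y = (\<Sum>n<N. d n) * y + d N * y" by (simp add: algebra_simps)
    also have "\<dots> \<le> 2*A*(F 0 - F N) + 2*A*(F N - F (Suc N))" using Suc.IH hstep[of N] by linarith
    also have "\<dots> = 2*A*(F 0 - F (Suc N))" by (simp add: algebra_simps)
    finally show ?case .
  qed
  define disc0 where "disc0 = disc C (\<omega> 0)"
  have kpos: "k > 0" using assms(3) by simp
  have Cne: "C \<noteq> {}" using assms(2,3) by auto
  have discb: "\<And>b. b \<in> C \<Longrightarrow> \<bar>\<omega> 0 b - 1/real k\<bar> \<le> disc0"
    unfolding disc0_def disc_def using assms(1,2) by (intro Max_ge) auto
  have disc_nn: "disc0 \<ge> 0" using discb Cne by (meson abs_ge_zero all_not_in_conv order_trans)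
  define Sk where "Sk = (\<Sum>j\<in>{1..<k}. real j * y^(k-j))"
  have PhiUp: "F 0 \<le> disc0 * Sk" unfolding F_def Sk_def using Phi_upper[OF assms(1,2) discb] y2 by simp
  have SkId: "A*A*Sk + real k*A*y + y = y^(k+1)" unfolding Sk_def y_def using wsum_id[OF assms(3)] by simp
  define M where "M = (1 + A) ^ (k + 1) / A * disc C (\<omega> 0)"
  have Apos: "A > 0" using assms(6) by simp
  have key: "2 * A * F 0 \<le> y * M"
  proof -
    have "real k * A * y \<ge> 0" using Apos y2 by simp
    hence AS: "A*A*Sk \<le> y^(k+1)" using SkId y2 by linarith
    have "A * (2 * A * F 0) \<le> 2 * disc0 * (A*A*Sk)"
    proof -
      have "A * (2 * A * F 0) = 2*A*A * F 0" by simp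
      also have "\<dots> \<le> 2*A*A * (disc0 * Sk)" using PhiUp Apos by (intro mult_left_mono) auto
      finally show ?thesis by (simp add: algebra_simps)
    qed
    also have "\<dots> \<le> 2 * disc0 * y^(k+1)" using AS disc_nn by (intro mult_left_mono) auto
    also have "\<dots> \<le> y * disc0 * y^(k+1)" using y2 disc_nn by (intro mult_right_mono) auto
    also have "\<dots> = A * (y * M)" unfolding M_def disc0_def y_def using Apos by (simp add: field_simps)
    finally show ?thesis using Apos by simp
  qed
  have bnd: "(\<Sum>n<N. d n) \<le> M" for N
  proof -
    have "(\<Sum>n<N. d n) * y \<le> M * y" 
    proof -
      have "A * F N \<ge> 0" using F0[of N] Apos by simp
      thus ?thesis using tel[of N] key by (simp add: algebra_simps)
    qed
    thus ?thesis using y2 by simp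
  qed
  have summ: "summable d"
    by (rule bounded_imp_summable[of d M]) (use d0 bnd[of "Suc _"] in \<open>auto simp: lessThan_Suc_atMost[symmetric] simp del: sum.lessThan_Suc\<close>)
  have "suminf d \<le> M" by (rule suminf_le_const[OF summ bnd])
  thus ?thesis using summ unfolding d_def M_def by simp
qed

end
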